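(* If $G$ is a connected graph of order at least two and $t\ge 2$, then $O_{\rm SR}(G\diamond K_t)=\mathcal{B}$.
   Context: All graphs are finite, simple and undirected; $\overline{X}$ denotes the complement of $X$. The modular product $G\diamond H$ has vertex set $V(G)\times V(H)$, and $(g,h)$, $(g',h')$ are adjacent iff one of the following holds: ($g=g'$ and $hh'\in E(H)$), or ($h=h'$ and $gg'\in E(G)$), or ($gg'\in E(G)$ and $hh'\in E(H)$), or ($gg'\in E(\overline{G})$ and $hh'\in E(\overline{H})$). A set $S\subseteq V(X)$ is a strong resolving set of a connected graph $X$ if for all distinct $x,y\in V(X)$ there exists $z\in S$ such that $x$ lies on a $y$–$z$ geodesic or $y$ lies on an $x$–$z$ geodesic. The Maker–Breaker strong resolving game on $X$: Maker and Breaker alternately select a not-yet-chosen vertex of $X$; Maker wins if the vertices he selects contain a strong resolving set of $X$, Breaker wins otherwise. In the M-game Maker moves first, in the B-game Breaker moves first. $O_{\rm SR}(X)=\mathcal{M}$ if Maker has a winning strategy in both games, $\mathcal{B}$ if Breaker has a winning strategy in both, and $\mathcal{N}$ if the first player has a winning strategy in each. *)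

theory Defs
  imports Main
begin

type_synonym 'a graph = "'a set \<times> ('a \<Rightarrow> 'a \<Rightarrow> bool)"

definition verts :: "'a graph \<Rightarrow> 'a set" where "verts G = fst G"
definition adj :: "'a graph \<Rightarrow> 'a \<Rightarrow> 'a \<Rightarrow> bool" where "adj G = snd G"

definition simple_graph :: "'a graph \<Rightarrow> bool" where
  "simple_graph G \<longleftrightarrow> finite (verts G)
     \<and> (\<forall>u v. adj G u v \<longrightarrow> u \<in> verts G \<and> v \<in> verts G)
     \<and> (\<forall>u v. adj G u v \<longrightarrow> adj G v u)
     \<and> (\<forall>u. \<not> adj G u u)"

definition co_adj :: "'a graph \<Rightarrow> 'a \<Rightarrow> 'a \<Rightarrow> bool" where
  "co_adj G u v \<longleftrightarrow> u \<in> verts G \<and> v \<in> verts G \<and> u \<noteq> v \<and> \<not> adj G u v"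

definition complete_graph :: "nat \<Rightarrow> nat graph" where
  "complete_graph t = ({0..<t}, \<lambda>i j. i < t \<and> j < t \<and> i \<noteq> j)"

definition modular_product :: "'a graph \<Rightarrow> 'b graph \<Rightarrow> ('a \<times> 'b) graph" where
  "modular_product G H = (verts G \<times> verts H,
     \<lambda>(g,h) (g',h'). (g,h) \<in> verts G \<times> verts H \<and> (g',h') \<in> verts G \<times> verts H \<and>
       ((g = g' \<and> adj H h h') \<or> (h = h' \<and> adj G g g') \<or>
        (adj G g g' \<and> adj H h h') \<or> (co_adj G g g' \<and> co_adj H h h')))"

definition walk :: "'a graph \<Rightarrow> 'a list \<Rightarrow> 'a \<Rightarrow> 'a \<Rightarrow> bool" where
  "walk G p x y \<longleftrightarrow> p \<noteq> [] \<and> hd p = x \<and> last p = y \<and> set p \<subseteq> verts G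
     \<and> (\<forall>i. Suc i < length p \<longrightarrow> adj G (p ! i) (p ! Suc i))"

definition connected_graph :: "'a graph \<Rightarrow> bool" where
  "connected_graph G \<longleftrightarrow> (\<forall>x\<in>verts G. \<forall>y\<in>verts G. \<exists>p. walk G p x y)"

definition gdist :: "'a graph \<Rightarrow> 'a \<Rightarrow> 'a \<Rightarrow> nat" where
  "gdist G x y = (LEAST n. \<exists>p. walk G p x y \<and> length p = Suc n)"

definition geodesic :: "'a graph \<Rightarrow> 'a list \<Rightarrow> 'a \<Rightarrow> 'a \<Rightarrow> bool" where
  "geodesic G p x y \<longleftrightarrow> walk G p x y \<and> length p = Suc (gdist G x y)"

definition on_geodesic :: "'a graph \<Rightarrow> 'a \<Rightarrow> 'a \<Rightarrow> 'a \<Rightarrow> bool" where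
  "on_geodesic G w x y \<longleftrightarrow> (\<exists>p. geodesic G p x y \<and> w \<in> set p)"

definition strong_resolving_set :: "'a graph \<Rightarrow> 'a set \<Rightarrow> bool" where
  "strong_resolving_set G S \<longleftrightarrow> S \<subseteq> verts G \<and>
     (\<forall>x\<in>verts G. \<forall>y\<in>verts G. x \<noteq> y \<longrightarrow>
        (\<exists>z\<in>S. on_geodesic G x y z \<or> on_geodesic G y x z))"

text \<open>States: Maker's set M, Breaker's set B,
  and whose turn it is (True = Maker to move).\<close>

definition maker_goal :: "'a graph \<Rightarrow> 'a set \<Rightarrow> bool" where
  "maker_goal G M \<longleftrightarrow> (\<exists>S\<subseteq>M. strong_resolving_set G S)"

inductive maker_can_win :: "'a graph \<Rightarrow> 'a set \<Rightarrow> 'a set \<Rightarrow> bool \<Rightarrow> bool"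
  for G where
  end_win: "verts G - M - B = {} \<Longrightarrow> maker_goal G M \<Longrightarrow> maker_can_win G M B mt"
| maker_move: "v \<in> verts G - M - B \<Longrightarrow> maker_can_win G (insert v M) B False
     \<Longrightarrow> maker_can_win G M B True"
| breaker_move: "verts G - M - B \<noteq> {} \<Longrightarrow>
     (\<forall>v\<in>verts G - M - B. maker_can_win G M (insert v B) True)
     \<Longrightarrow> maker_can_win G M B False"

inductive breaker_can_win :: "'a graph \<Rightarrow> 'a set \<Rightarrow> 'a set \<Rightarrow> bool \<Rightarrow> bool"
  for G where
  end_win: "verts G - M - B = {} \<Longrightarrow> \<not> maker_goal G M \<Longrightarrow> breaker_can_win G M B mt"
| breaker_move: "v \<in> verts G - M - B \<Longrightarrow> breaker_can_win G M (insert v B) True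
     \<Longrightarrow> breaker_can_win G M B False"
| maker_move: "verts G - M - B \<noteq> {} \<Longrightarrow>
     (\<forall>v\<in>verts G - M - B. breaker_can_win G (insert v M) B False)
     \<Longrightarrow> breaker_can_win G M B True"

datatype outcome = Out_M | Out_B | Out_N | Out_P

text \<open>M-game: Maker first (turn True); B-game: Breaker first (turn False).\<close>
definition O_SR :: "'a graph \<Rightarrow> outcome" where
  "O_SR G = (if maker_can_win G {} {} True \<and> maker_can_win G {} {} False then Out_M
     else if breaker_can_win G {} {} True \<and> breaker_can_win G {} {} False then Out_B
     else if maker_can_win G {} {} True \<and> breaker_can_win G {} {} False then Out_N
     else Out_P)"

end

theory Submission
  imports Defs
begin


lemma walk_Cons:
  "walk G (a # p) a' y \<longleftrightarrow> a = a' \<and> a \<in> verts G \<and>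
     (if p = [] then y = a else adj G a (hd p) \<and> walk G p (hd p) y)"
proof (cases p)
  case Nil then show ?thesis by (auto simp: walk_def)
next
  case (Cons b q)
  have "(\<forall>i. Suc i < length (a#b#q) \<longrightarrow> adj G ((a#b#q) ! i) ((a#b#q) ! Suc i)) \<longleftrightarrow>
        adj G a b \<and> (\<forall>i. Suc i < length (b#q) \<longrightarrow> adj G ((b#q) ! i) ((b#q) ! Suc i))"
    (is "?L \<longleftrightarrow> ?R")
  proof
    assume ?L
    then show ?R by (metis Suc_less_eq length_Cons nth_Cons_0 nth_Cons_Suc zero_less_Suc)
  next
    assume R: ?R
    show ?L
    proof (intro allI impI)
      fix i assume "Suc i < length (a#b#q)"
      then show "adj G ((a#b#q) ! i) ((a#b#q) ! Suc i)"
        using R by (cases i) auto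
    qed
  qed
  then show ?thesis using Cons by (auto simp: walk_def)
qed

lemma gdist_le: "walk G p x y \<Longrightarrow> gdist G x y \<le> length p - 1"
  unfolding gdist_def
  by (rule Least_le) (auto simp: walk_def)

lemma gdist_walk: "walk G p x y \<Longrightarrow> \<exists>q. walk G q x y \<and> length q = Suc (gdist G x y)"
  unfolding gdist_def
  by (rule LeastI_ex[of "\<lambda>n. \<exists>p. walk G p x y \<and> length p = Suc n"]) (auto simp: walk_def intro!: exI[of _ "length p - 1"] exI[of _ p])

lemma gdist_self: "x \<in> verts G \<Longrightarrow> gdist G x x = 0"
  using gdist_le[of G "[x]" x x] by (auto simp: walk_def)

lemma gdist_pos: "walk G p x z \<Longrightarrow> x \<noteq> z \<Longrightarrow> gdist G x z \<ge> 1"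
proof (rule ccontr)
  assume w: "walk G p x z" and ne: "x \<noteq> z" and "\<not> gdist G x z \<ge> 1"
  then have "gdist G x z = 0" by simp
  with gdist_walk[OF w] obtain q where "walk G q x z" "length q = 1" by auto
  then show False using ne by (cases q) (auto simp: walk_def)
qed

lemma geodesic_split:
  assumes g: "geodesic G p y z" and x: "x \<in> set p"
  shows "gdist G y x + gdist G x z \<le> gdist G y z"
proof -
  from x obtain i where i: "i < length p" "p ! i = x" by (auto simp: in_set_conv_nth)
  have w: "walk G p y z" and len: "length p = Suc (gdist G y z)" using g by (auto simp: geodesic_def)
  have l1: "last (take (Suc i) p) = x" using i by (simp add: take_Suc_conv_app_nth)
  have w1: "walk G (take (Suc i) p) y x"
    using w i l1 unfolding walk_def
    by (auto simp: hd_conv_nth dest: in_set_takeD)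
  have w2: "walk G (drop i p) x z"
    using w i unfolding walk_def
    by (auto simp: hd_drop_conv_nth dest: in_set_dropD)
  have "gdist G y x \<le> i" using gdist_le[OF w1] i by simp
  moreover have "gdist G x z \<le> length p - i - 1" using gdist_le[OF w2] by simp
  ultimately show ?thesis using len i by linarith
qed

lemma maker_breaker_excl:
  "maker_can_win G M B mt \<Longrightarrow> breaker_can_win G M B mt \<Longrightarrow> False"
proof (induction rule: maker_can_win.induct)
  case (end_win M B mt)
  then show ?case by (auto elim: breaker_can_win.cases)
next
  case (maker_move v M B)
  from maker_move.prems show ?case
    by (cases rule: breaker_can_win.cases) (use maker_move in auto)
next
  case (breaker_move M B)
  from breaker_move.prems show ?case
    by (cases rule: breaker_can_win.cases) (use breaker_move in auto)
qed

lemma breaker_holds: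
  assumes fin: "finite (verts G)"
    and xy: "x \<in> B" "y \<in> B" "x \<notin> M" "y \<notin> M"
    and H: "\<And>M'. maker_goal G M' \<Longrightarrow> x \<in> M' \<or> y \<in> M'"
  shows "breaker_can_win G M B True \<and> breaker_can_win G M B False"
  using xy
proof (induction "card (verts G - M - B)" arbitrary: M B rule: less_induct)
  case less
  show ?case
  proof (cases "verts G - M - B = {}")
    case True
    then show ?thesis using H less.prems by (auto intro: breaker_can_win.end_win)
  next
    case False
    have "\<forall>v\<in>verts G - M - B. breaker_can_win G (insert v M) B False"
    proof
      fix v assume v: "v \<in> verts G - M - B"
      have "card (verts G - insert v M - B) < card (verts G - M - B)"
        using v fin by (intro psubset_card_mono) auto
      then show "breaker_can_win G (insert v M) B False"
        using less v by auto
    qed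
    then have 1: "breaker_can_win G M B True" using False by (rule breaker_can_win.maker_move[rotated])
    from False obtain v where v: "v \<in> verts G - M - B" by auto
    have "card (verts G - M - insert v B) < card (verts G - M - B)"
      using v fin by (intro psubset_card_mono) auto
    then have "breaker_can_win G M (insert v B) True"
      using less v by auto
    then have "breaker_can_win G M B False" using v by (rule breaker_can_win.breaker_move[rotated])
    then show ?thesis using 1 by simp
  qed
qed

lemma pick_out:
  assumes "finite Q" "card F < card Q" "finite F"
  shows "\<exists>q\<in>Q. q \<notin> F"
proof (rule ccontr)
  assume "\<not> ?thesis"
  then have "Q \<subseteq> F" by auto
  then have "card Q \<le> card F" using assms by (simp add: card_mono)
  then show False using assms by simp
qed

lemma breaker_wins_game:
  assumes fin: "finite (verts G)" and Q: "Q \<subseteq> verts G" "finite Q" "card Q \<ge> 4"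
    and H: "\<And>M p q. maker_goal G M \<Longrightarrow> p \<in> Q \<Longrightarrow> q \<in> Q \<Longrightarrow> p \<noteq> q \<Longrightarrow> p \<in> M \<or> q \<in> M"
  shows "breaker_can_win G {} {} True \<and> breaker_can_win G {} {} False"
proof
  have step: "breaker_can_win G {m} {q1} True" if q1: "q1 \<in> Q" "q1 \<noteq> m" for m q1
  proof -
    have "\<forall>v\<in>verts G - {m} - {q1}. breaker_can_win G (insert v {m}) {q1} False"
    proof
      fix m2 assume m2: "m2 \<in> verts G - {m} - {q1}"
      have "card {m, m2, q1} \<le> 3" by (simp add: card_insert_if)
      then have "card {m, m2, q1} < card Q" using Q by linarith
      then obtain q2 where q2: "q2 \<in> Q" "q2 \<notin> {m, m2, q1}" using pick_out[OF Q(2)] by blast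
      have "breaker_can_win G {m2, m} {q2, q1} True"
        using breaker_holds[OF fin, of q1 "{q2,q1}" q2 "{m2,m}"] q1 q2 m2 H by blast
      then have "breaker_can_win G {m2, m} {q1} False"
        using q2 Q m2 by (intro breaker_can_win.breaker_move[of q2]) auto
      then show "breaker_can_win G (insert m2 {m}) {q1} False" by simp
    qed
    moreover have "verts G - {m} - {q1} \<noteq> {}"
    proof -
      have "card {m, q1} < card Q" using Q by (simp add: card_insert_if)
      then obtain q where "q \<in> Q" "q \<notin> {m, q1}" using pick_out[OF Q(2)] by blast
      then show ?thesis using Q by auto
    qed
    ultimately show ?thesis by (rule breaker_can_win.maker_move[rotated])
  qed
  show "breaker_can_win G {} {} True"
  proof (rule breaker_can_win.maker_move)
    show "verts G - {} - {} \<noteq> {}" using Q by (auto simp: card_gt_0_iff[symmetric])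
    show "\<forall>v\<in>verts G - {} - {}. breaker_can_win G (insert v {}) {} False"
    proof
      fix m assume m: "m \<in> verts G - {} - {}"
      have "card {m} < card Q" using Q by simp
      then obtain q1 where q1: "q1 \<in> Q" "q1 \<notin> {m}" using pick_out[OF Q(2)] by blast
      have "breaker_can_win G {m} {q1} True" using step q1 by auto
      then show "breaker_can_win G (insert m {}) {} False"
        using q1 Q by (intro breaker_can_win.breaker_move[of q1]) auto
    qed
  qed
  have "Q \<noteq> {}" using Q by auto
  then obtain a where a: "a \<in> Q" by blast
  have "breaker_can_win G {} {a} True"
  proof (rule breaker_can_win.maker_move)
    have "card {a} < card Q" using Q by simp
    then obtain q where "q \<in> Q" "q \<notin> {a}" using pick_out[OF Q(2)] by blast
    then show "verts G - {} - {a} \<noteq> {}" using Q by auto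
    show "\<forall>v\<in>verts G - {} - {a}. breaker_can_win G (insert v {}) {a} False"
    proof
      fix m assume m: "m \<in> verts G - {} - {a}"
      have "card {m, a} < card Q" using Q by (simp add: card_insert_if)
      then obtain q where q: "q \<in> Q" "q \<notin> {m, a}" using pick_out[OF Q(2)] by blast
      have "breaker_can_win G {m} {q, a} True"
        using breaker_holds[OF fin, of a "{q,a}" q "{m}"] q a m H by blast
      then show "breaker_can_win G (insert m {}) {a} False"
        using q Q m by (intro breaker_can_win.breaker_move[of q]) auto
    qed
  qed
  then show "breaker_can_win G {} {} False"
    using a Q by (intro breaker_can_win.breaker_move[of a]) auto
qed



abbreviation PP :: "'a graph \<Rightarrow> nat \<Rightarrow> ('a \<times> nat) graph" where
  "PP G t \<equiv> modular_product G (complete_graph t)"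

lemma vertsP: "verts (PP G t) = verts G \<times> {0..<t}"
  by (simp add: modular_product_def verts_def complete_graph_def)

lemma adjP: "adj (PP G t) (g,h) (g',h') \<longleftrightarrow> g \<in> verts G \<and> g' \<in> verts G \<and> h < t \<and> h' < t \<and>
   ((g = g' \<and> h \<noteq> h') \<or> adj G g g')"
  by (auto simp: modular_product_def adj_def verts_def complete_graph_def co_adj_def)

lemma proj_walk:
  "walk (PP G t) q x y \<Longrightarrow> \<exists>p. walk G p (fst x) (fst y) \<and> length p \<le> length q"
proof (induction q arbitrary: x)
  case Nil then show ?case by (simp add: walk_def)
next
  case (Cons a q)
  show ?case
  proof (cases "q = []")
    case True
    then have "x \<in> verts (PP G t)" "y = x" using Cons.prems by (auto simp: walk_Cons)
    then have "walk G [fst x] (fst x) (fst y)" by (auto simp: walk_def vertsP)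
    then show ?thesis by force
  next
    case False
    then have a: "a = x" "x \<in> verts (PP G t)" "adj (PP G t) x (hd q)" "walk (PP G t) q (hd q) y"
      using Cons.prems by (auto simp: walk_Cons)
    from Cons.IH[OF a(4)] obtain p where p: "walk G p (fst (hd q)) (fst y)" "length p \<le> length q" by blast
    show ?thesis
    proof (cases "fst x = fst (hd q)")
      case True then show ?thesis using p by (intro exI[of _ p]) auto
    next
      case ne: False
      obtain g h g' h' where gh: "x = (g,h)" "hd q = (g',h')" by (cases x, cases "hd q") auto
      have "adj G g g'" using a(3) ne unfolding gh by (auto simp: adjP)
      moreover have "p \<noteq> []" "hd p = g'" using p gh by (auto simp: walk_def)
      moreover have "g \<in> verts G" using a(2) gh by (auto simp: vertsP)
      moreover have "walk G p g' (fst y)" using p gh by simp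
      ultimately have "walk G (g # p) g (fst y)" by (auto simp: walk_Cons)
      then show ?thesis using p gh by (intro exI[of _ "g # p"]) auto
    qed
  qed
qed

lemma lift_walk:
  assumes w: "walk G p a b" and l: "length p \<ge> 2" and h: "h0 < t" "h1 < t"
  shows "walk (PP G t) (map (\<lambda>i. (p!i, if i=0 then h0 else h1)) [0..<length p]) (a,h0) (b,h1)"
proof -
  have ne: "p \<noteq> []" and hd: "p ! 0 = a" and lst: "p ! (length p - 1) = b"
    and sv: "set p \<subseteq> verts G" and ad: "\<forall>i. Suc i < length p \<longrightarrow> adj G (p ! i) (p ! Suc i)"
    using w by (auto simp: walk_def hd_conv_nth last_conv_nth)
  have vi: "p ! i \<in> verts G" if "i < length p" for i using sv that by auto
  show ?thesis unfolding walk_def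
    using ne hd lst l h vi ad
    by (auto simp: hd_map last_map vertsP adjP hd_upt last_upt)
qed

lemma P_walk_bound:
  assumes con: "connected_graph G" and x: "(g,h) \<in> verts (PP G t)" and z: "(g',h') \<in> verts (PP G t)"
  shows "\<exists>q. walk (PP G t) q (g,h) (g',h') \<and> length q \<le> Suc (max 1 (gdist G g g'))"
proof (cases "g = g'")
  case True
  show ?thesis
  proof (cases "h = h'")
    case True
    then have "walk (PP G t) [(g,h)] (g,h) (g',h')" using x \<open>g = g'\<close> by (auto simp: walk_def)
    then show ?thesis by force
  next
    case False
    then have "walk (PP G t) [(g,h),(g',h')] (g,h) (g',h')" using x z \<open>g = g'\<close>
      by (auto simp: walk_Cons vertsP adjP)
    then show ?thesis by force
  qed
next
  case False
  have gv: "g \<in> verts G" "g' \<in> verts G" "h < t" "h' < t" using x z by (auto simp: vertsP)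
  then obtain p0 where "walk G p0 g g'" using con by (auto simp: connected_graph_def)
  from gdist_walk[OF this] obtain p where p: "walk G p g g'" "length p = Suc (gdist G g g')" by blast
  have "length p \<ge> 2"
  proof (rule ccontr)
    assume "\<not> length p \<ge> 2"
    then have "length p = 1" using p by (cases p) (auto simp: walk_def)
    then show False using p False by (cases p) (auto simp: walk_def)
  qed
  from lift_walk[OF p(1) this gv(3,4)] show ?thesis using p by force
qed

lemma P_connected:
  assumes con: "connected_graph G" and x: "x \<in> verts (PP G t)" and z: "z \<in> verts (PP G t)"
  shows "\<exists>q. walk (PP G t) q x z"
  using P_walk_bound[OF con, of "fst x" "snd x" t "fst z" "snd z"] x z by auto

lemma P_upper:
  assumes con: "connected_graph G" and x: "(g,h) \<in> verts (PP G t)" and z: "(g',h') \<in> verts (PP G t)"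
    and D: "\<forall>a\<in>verts G. \<forall>b\<in>verts G. gdist G a b \<le> D" and D1: "D \<ge> 1"
  shows "gdist (PP G t) (g,h) (g',h') \<le> D"
proof -
  obtain q where q: "walk (PP G t) q (g,h) (g',h')" "length q \<le> Suc (max 1 (gdist G g g'))"
    using P_walk_bound[OF con x z] by blast
  have "gdist G g g' \<le> D" using D x z by (auto simp: vertsP)
  then show ?thesis using gdist_le[OF q(1)] q(2) D1 by linarith
qed

lemma P_lower:
  assumes con: "connected_graph G" and x: "x \<in> verts (PP G t)" and z: "z \<in> verts (PP G t)"
  shows "gdist G (fst x) (fst z) \<le> gdist (PP G t) x z"
proof -
  obtain q0 where "walk (PP G t) q0 x z" using P_connected[OF con x z] by blast
  from gdist_walk[OF this] obtain q where q: "walk (PP G t) q x z" "length q = Suc (gdist (PP G t) x z)" by blast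
  from proj_walk[OF q(1)] obtain p where "walk G p (fst x) (fst z)" "length p \<le> length q" by blast
  then show ?thesis using gdist_le[of G p] q(2) by fastforce
qed

lemma P_twin:
  assumes con: "connected_graph G" and x: "(g,h) \<in> verts (PP G t)" and y: "(g,h') \<in> verts (PP G t)"
    and hh: "h \<noteq> h'" and z: "z \<in> verts (PP G t)" "z \<noteq> (g,h)" "z \<noteq> (g,h')"
  shows "gdist (PP G t) (g,h') z \<le> gdist (PP G t) (g,h) z"
proof -
  obtain q0 where "walk (PP G t) q0 (g,h) z" using P_connected[OF con x z(1)] by blast
  from gdist_walk[OF this] obtain q where q: "walk (PP G t) q (g,h) z" "length q = Suc (gdist (PP G t) (g,h) z)" by blast
  then obtain q' where qq: "q = (g,h) # q'" by (cases q) (auto simp: walk_def)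
  have "q' \<noteq> []" using q z qq by (auto simp: walk_Cons)
  then have a: "adj (PP G t) (g,h) (hd q')" "walk (PP G t) q' (hd q') z"
    using q(1) unfolding qq by (auto simp: walk_Cons)
  show ?thesis
  proof (cases "hd q' = (g,h')")
    case True
    then have "gdist (PP G t) (g,h') z \<le> length q' - 1" using gdist_le a(2) by metis
    then show ?thesis using q(2) qq by simp
  next
    case False
    obtain g3 h3 where w: "hd q' = (g3,h3)" by (cases "hd q'") auto
    have "adj (PP G t) (g,h') (g3,h3)" using a(1) False y unfolding w by (auto simp: adjP vertsP)
    then have "walk (PP G t) ((g,h') # q') (g,h') z" using a(2) y w \<open>q' \<noteq> []\<close> by (auto simp: walk_Cons)
    from gdist_le[OF this] show ?thesis using q(2) qq by simp
  qed
qed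



lemma walk_rev:
  assumes sym: "\<forall>a b. adj G a b \<longrightarrow> adj G b a" and w: "walk G p x y"
  shows "walk G (rev p) y x"
proof -
  have ad: "\<forall>i. Suc i < length p \<longrightarrow> adj G (p ! i) (p ! Suc i)" using w by (simp add: walk_def)
  have "adj G (rev p ! i) (rev p ! Suc i)" if i: "Suc i < length p" for i
  proof -
    have "adj G (p ! (length p - Suc (Suc i))) (p ! Suc (length p - Suc (Suc i)))"
      using ad i by auto
    moreover have "Suc (length p - Suc (Suc i)) = length p - Suc i" using i by simp
    ultimately show ?thesis using sym i by (simp add: rev_nth)
  qed
  then show ?thesis using w by (auto simp: walk_def hd_rev last_rev)
qed

lemma gdist_sym:
  assumes sym: "\<forall>a b. adj G a b \<longrightarrow> adj G b a" and w: "walk G p x y"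
  shows "gdist G y x \<le> gdist G x y"
proof -
  obtain q where q: "walk G q x y" "length q = Suc (gdist G x y)" using gdist_walk[OF w] by blast
  show ?thesis using gdist_le[OF walk_rev[OF sym q(1)]] q(2) by simp
qed

lemma key_no_geo:
  assumes con: "connected_graph G" and sym: "\<forall>a b. adj G a b \<longrightarrow> adj G b a"
    and uv: "u \<in> verts G" "v \<in> verts G" "u \<noteq> v"
    and mx: "\<forall>a\<in>verts G. \<forall>b\<in>verts G. gdist G a b \<le> gdist G u v"
    and t: "t \<ge> 2"
    and xy: "x \<in> {(u,0),(u,1),(v,0),(v,1)}" "y \<in> {(u,0),(u,1),(v,0),(v,1)}" "x \<noteq> y"
    and z: "z \<in> verts (PP G t)" "z \<noteq> x" "z \<noteq> y"
  shows "\<not> on_geodesic (PP G t) x y z"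
proof
  assume "on_geodesic (PP G t) x y z"
  then obtain p where p: "geodesic (PP G t) p y z" "x \<in> set p" by (auto simp: on_geodesic_def)
  have sp: "gdist (PP G t) y x + gdist (PP G t) x z \<le> gdist (PP G t) y z"
    by (rule geodesic_split[OF p])
  have xv: "x \<in> verts (PP G t)" and yv: "y \<in> verts (PP G t)" using xy uv t by (auto simp: vertsP)
  obtain w1 where "walk (PP G t) w1 x z" using P_connected[OF con xv z(1)] by blast
  then have xz: "gdist (PP G t) x z \<ge> 1" using gdist_pos z by metis
  obtain w2 where "walk (PP G t) w2 y x" using P_connected[OF con yv xv] by blast
  then have yx: "gdist (PP G t) y x \<ge> 1" using gdist_pos xy by metis
  obtain gx hx gy hy where gxy: "x = (gx,hx)" "y = (gy,hy)" by (cases x, cases y) auto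
  show False
  proof (cases "gx = gy")
    case True
    then have "hx \<noteq> hy" using xy gxy by auto
    then have "gdist (PP G t) y z \<le> gdist (PP G t) x z"
      using P_twin[OF con, of gx hx t hy z] xv yv z gxy True by auto
    then show False using sp yx by linarith
  next
    case False
    have D1: "gdist G u v \<ge> 1"
    proof -
      obtain w where "walk G w u v" using con uv by (auto simp: connected_graph_def)
      then show ?thesis using gdist_pos uv by metis
    qed
    obtain w where "walk G w u v" using con uv by (auto simp: connected_graph_def)
    have "gdist G v u = gdist G u v" using mx uv gdist_sym[OF sym walk_rev[OF sym \<open>walk G w u v\<close>]] by (meson le_antisym)
    then have "gdist G gy gx = gdist G u v" using False xy gxy by auto
    then have "gdist (PP G t) y x \<ge> gdist G u v" using P_lower[OF con yv xv] gxy by simp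
    moreover have "gdist (PP G t) y z \<le> gdist G u v"
      using P_upper[OF con, of gy hy t "fst z" "snd z"] yv z gxy mx D1 by auto
    ultimately show False using sp xz by linarith
  qed
qed

theorem mainTheorem16:
  fixes G :: "'a graph" and t :: nat
  assumes "simple_graph G" and "connected_graph G" and "card (verts G) \<ge> 2" and "t \<ge> 2"
  shows "O_SR (modular_product G (complete_graph t)) = Out_B"
proof -
  note con = assms(2)
  have sym: "\<forall>a b. adj G a b \<longrightarrow> adj G b a" using assms(1) by (simp add: simple_graph_def)
  have fin: "finite (verts G)" using assms(1) by (simp add: simple_graph_def)
  define S where "S = (\<lambda>(a,b). gdist G a b) ` (verts G \<times> verts G)"
  have "finite S" "S \<noteq> {}" using fin assms(3) by (auto simp: S_def)
  then have "Max S \<in> S" by simp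
  then obtain u v where uv: "u \<in> verts G" "v \<in> verts G" "gdist G u v = Max S" by (auto simp: S_def)
  have mx: "\<forall>a\<in>verts G. \<forall>b\<in>verts G. gdist G a b \<le> gdist G u v"
  proof (intro ballI)
    fix a b assume "a \<in> verts G" "b \<in> verts G"
    then have "gdist G a b \<in> S" by (force simp: S_def)
    then show "gdist G a b \<le> gdist G u v" using uv \<open>finite S\<close> by simp
  qed
  have "\<not> card (verts G) \<le> Suc 0" using assms(3) by simp
  then have "\<not> (\<forall>a\<in>verts G. \<forall>b\<in>verts G. a = b)" using card_le_Suc0_iff_eq[OF fin] by simp
  then obtain a b where ab: "a \<in> verts G" "b \<in> verts G" "a \<noteq> b" by blast
  obtain w where "walk G w a b" using con ab by (auto simp: connected_graph_def)
  then have "gdist G a b \<ge> 1" by (rule gdist_pos[OF _ ab(3)])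
  then have D1: "gdist G u v \<ge> 1" using mx ab by (meson order_trans)
  have uvne: "u \<noteq> v"
  proof
    assume "u = v"
    then have "gdist G u v = 0" using gdist_self[of u G] uv(1) by simp
    then show False using D1 by simp
  qed
  define Q where "Q = {(u,0::nat),(u,1),(v,0),(v,1)}"
  have finP: "finite (verts (PP G t))" using fin by (simp add: vertsP)
  have QP: "Q \<subseteq> verts (PP G t)" using uv assms(4) by (auto simp: Q_def vertsP)
  have cQ: "card Q \<ge> 4" using uvne by (simp add: Q_def card_insert_if)
  have H: "p \<in> M \<or> q \<in> M" if M: "maker_goal (PP G t) M" and pq: "p \<in> Q" "q \<in> Q" "p \<noteq> q" for M p q
  proof (rule ccontr)
    assume nm: "\<not> (p \<in> M \<or> q \<in> M)"
    from M obtain R where R: "R \<subseteq> M" "strong_resolving_set (PP G t) R" by (auto simp: maker_goal_def)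
    have pv: "p \<in> verts (PP G t)" and qv: "q \<in> verts (PP G t)" using pq QP by auto
    have RV: "R \<subseteq> verts (PP G t)" and
      RR: "\<forall>x\<in>verts (PP G t). \<forall>y\<in>verts (PP G t). x \<noteq> y \<longrightarrow>
        (\<exists>z\<in>R. on_geodesic (PP G t) x y z \<or> on_geodesic (PP G t) y x z)"
      using R(2) unfolding strong_resolving_set_def by blast+
    have "\<exists>z\<in>R. on_geodesic (PP G t) p q z \<or> on_geodesic (PP G t) q p z"
      using RR pv qv pq(3) by blast
    then obtain z where z: "z \<in> R" "on_geodesic (PP G t) p q z \<or> on_geodesic (PP G t) q p z"
      by blast
    have zv: "z \<in> verts (PP G t)" "z \<noteq> p" "z \<noteq> q" using z(1) RV R(1) nm by auto
    have pin: "p \<in> {(u,0),(u,1),(v,0),(v,1)}" and qin: "q \<in> {(u,0),(u,1),(v,0),(v,1)}"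
      using pq unfolding Q_def by simp_all
    have n1: "\<not> on_geodesic (PP G t) p q z"
      by (rule key_no_geo[OF con sym uv(1,2) uvne mx assms(4) pin qin pq(3) zv])
    have n2: "\<not> on_geodesic (PP G t) q p z"
      by (rule key_no_geo[OF con sym uv(1,2) uvne mx assms(4) qin pin pq(3)[symmetric] zv(1,3,2)])
    show False using z(2) n1 n2 by blast
  qed
  have bw: "breaker_can_win (PP G t) {} {} True \<and> breaker_can_win (PP G t) {} {} False"
  proof (rule breaker_wins_game[OF finP QP _ cQ])
    show "finite Q" by (simp add: Q_def)
  next
    fix M p q assume "maker_goal (PP G t) M" "p \<in> Q" "q \<in> Q" "p \<noteq> q"
    then show "p \<in> M \<or> q \<in> M" by (rule H)
  qed
  then have "\<not> maker_can_win (PP G t) {} {} True" using maker_breaker_excl by blast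
  then show ?thesis using bw by (simp add: O_SR_def)
qed

end
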